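(* Let $n\ge 2$, $u\in\mathbb{R}^n$ and $s,v\in\mathcal{Q}_0(u)$. Then $(sv^t)^{[2]}$ is a $P_0$-matrix.
   Context: For $u\in\mathbb{R}^n$, $\mathcal{Q}(u)$ is the set of vectors with the same entrywise sign pattern as $u$, and $\mathcal{Q}_0(u)$ its closure. A square real matrix is a $P_0$-matrix if all its principal minors are nonnegative. For $M\in\mathbb{R}^{n\times n}$, $M^{[2]}$ is the second additive compound: the matrix of $x\wedge y\mapsto Mx\wedge y+x\wedge My$ on $\Lambda^2\mathbb{R}^n$ in the lexicographically ordered basis $e_i\wedge e_j$, $i<j$. *)

theory Defs
  imports "HOL-Analysis.Analysis"
begin

definition Qset :: "real^'n \<Rightarrow> (real^'n) set" where
  "Qset u = {x. \<forall>i. sgn (x$i) = sgn (u$i)}"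

definition Q0set :: "real^'n \<Rightarrow> (real^'n) set" where
  "Q0set u = closure (Qset u)"

(* Index set of the basis e_i \<and> e_j, i < j, of \<Lambda>^2 R^n *)
definition pairs_idx :: "('n::linorder \<times> 'n) set" where
  "pairs_idx = {(i,j). i < j}"

(* Coordinate of x \<and> y at basis vector e_i \<and> e_j (i < j) *)
definition wedge2 :: "real^'n \<Rightarrow> real^'n \<Rightarrow> ('n \<times> 'n) \<Rightarrow> real" where
  "wedge2 x y p = x $ fst p * y $ snd p - x $ snd p * y $ fst p"

(* Second additive compound: entry in row (i,j), column (k,l) is the (i,j)-coordinate of
   M e_k \<and> e_l + e_k \<and> M e_l; as a matrix indexed by pairs_idx *)
definition add_compound2 :: "real^'n^'n \<Rightarrow> ('n \<times> 'n) \<Rightarrow> ('n \<times> 'n) \<Rightarrow> real" where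
  "add_compound2 M p q =
     wedge2 (M *v axis (fst q) 1) (axis (snd q) 1) p + wedge2 (axis (fst q) 1) (M *v axis (snd q) 1) p"

definition det_on :: "'a set \<Rightarrow> ('a \<Rightarrow> 'a \<Rightarrow> real) \<Rightarrow> real" where
  "det_on S A = (\<Sum>p | p permutes S. of_int (sign p) * (\<Prod>i\<in>S. A i (p i)))"

definition P0_on :: "'a set \<Rightarrow> ('a \<Rightarrow> 'a \<Rightarrow> real) \<Rightarrow> bool" where
  "P0_on I A \<longleftrightarrow> (\<forall>S. S \<subseteq> I \<and> S \<noteq> {} \<longrightarrow> det_on S A \<ge> 0)"

end

theory Submission
  imports Defs
begin

definition Delta :: "('a \<Rightarrow> 'c \<Rightarrow> real) \<Rightarrow> 'a set \<Rightarrow> ('a \<Rightarrow> 'c) \<Rightarrow> real" where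
  "Delta X S f = (\<Sum>p | p permutes S. of_int (sign p) * (\<Prod>a\<in>S. X (p a) (f a)))"

lemma det_expand:
  assumes "finite S" "finite C"
  shows "det_on S (\<lambda>a b. \<Sum>c\<in>C. X a c * Y b c)
       = (\<Sum>f\<in>PiE S (\<lambda>_. C). (\<Prod>a\<in>S. X a (f a)) * Delta Y S f)"
proof -
  have "det_on S (\<lambda>a b. \<Sum>c\<in>C. X a c * Y b c)
     = (\<Sum>p | p permutes S. of_int (sign p) * (\<Sum>f\<in>PiE S (\<lambda>_. C). \<Prod>a\<in>S. X a (f a) * Y (p a) (f a)))"
    unfolding det_on_def using assms by (simp add: prod_sum_PiE)
  also have "\<dots> = (\<Sum>p | p permutes S. \<Sum>f\<in>PiE S (\<lambda>_. C). (\<Prod>a\<in>S. X a (f a)) * (of_int (sign p) * (\<Prod>a\<in>S. Y (p a) (f a))))"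
    by (simp add: sum_distrib_left prod.distrib mult_ac)
  also have "\<dots> = (\<Sum>f\<in>PiE S (\<lambda>_. C). \<Sum>p | p permutes S. (\<Prod>a\<in>S. X a (f a)) * (of_int (sign p) * (\<Prod>a\<in>S. Y (p a) (f a))))"
    by (rule sum.swap)
  also have "\<dots> = (\<Sum>f\<in>PiE S (\<lambda>_. C). (\<Prod>a\<in>S. X a (f a)) * Delta Y S f)"
    by (simp add: Delta_def sum_distrib_left)
  finally show ?thesis .
qed

lemma Delta_comp:
  assumes "finite S" "q permutes S"
  shows "Delta Y S (f \<circ> q) = of_int (sign q) * Delta Y S f"
proof -
  have iq: "inv q permutes S" using assms(2) by (rule permutes_inv)
  have pq: "permutation q" using assms permutation_permutes by blast
  have "Delta Y S f = (\<Sum>p | p permutes S. of_int (sign (p \<circ> inv q)) * (\<Prod>a\<in>S. Y ((p \<circ> inv q) a) (f a)))"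
    unfolding Delta_def by (rule sum_permutations_compose_right[OF iq])
  also have "\<dots> = (\<Sum>p | p permutes S. of_int (sign q) * (of_int (sign p) * (\<Prod>a\<in>S. Y (p a) (f (q a)))))"
  proof (rule sum.cong[OF refl])
    fix p assume "p \<in> {p. p permutes S}"
    hence p: "p permutes S" by simp
    have pp: "permutation p" using p assms(1) permutation_permutes by blast
    have s: "sign (p \<circ> inv q) = sign p * sign q"
      using pp pq by (simp add: sign_compose permutation_inverse sign_inverse)
    have "(\<Prod>a\<in>S. Y ((p \<circ> inv q) a) (f a)) = (\<Prod>a\<in>S. Y ((p \<circ> inv q) (q a)) (f (q a)))"
      using prod.permute[OF assms(2), of "\<lambda>a. Y ((p \<circ> inv q) a) (f a)"] by (simp add: o_def)
    also have "\<dots> = (\<Prod>a\<in>S. Y (p a) (f (q a)))"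
      using permutes_inverses(2)[OF assms(2)] by simp
    finally show "of_int (sign (p \<circ> inv q)) * (\<Prod>a\<in>S. Y ((p \<circ> inv q) a) (f a)) =
         of_int (sign q) * (of_int (sign p) * (\<Prod>a\<in>S. Y (p a) (f (q a))))"
      by (simp add: s)
  qed
  also have "\<dots> = of_int (sign q) * Delta Y S (f \<circ> q)"
    by (simp add: Delta_def sum_distrib_left)
  finally have "Delta Y S f = of_int (sign q) * Delta Y S (f \<circ> q)" .
  hence "of_int (sign q) * Delta Y S f = (of_int (sign q) * of_int (sign q)) * Delta Y S (f \<circ> q)"
    by simp
  also have "of_int (sign q) * of_int (sign q) = (1::real)"
    by (simp add: sign_def)
  finally show ?thesis by (simp add: o_def)
qed

lemma Delta_avg:
  assumes "finite S"
  shows "(\<Sum>q | q permutes S. of_int (sign q) * (\<Prod>a\<in>S. X a (f (q a)))) = Delta X S f"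
proof -
  have "Delta X S f = (\<Sum>q | q permutes S. of_int (sign (inv q)) * (\<Prod>a\<in>S. X (inv q a) (f a)))"
    unfolding Delta_def by (rule sum_permutations_inverse)
  also have "\<dots> = (\<Sum>q | q permutes S. of_int (sign q) * (\<Prod>a\<in>S. X a (f (q a))))"
  proof (rule sum.cong[OF refl])
    fix q assume "q \<in> {p. p permutes S}"
    hence q: "q permutes S" by simp
    have pq: "permutation q" using q assms permutation_permutes by blast
    have "(\<Prod>a\<in>S. X (inv q a) (f a)) = (\<Prod>a\<in>S. X (inv q (q a)) (f (q a)))"
      using prod.permute[OF q, of "\<lambda>a. X (inv q a) (f a)"] by (simp add: o_def)
    also have "\<dots> = (\<Prod>a\<in>S. X a (f (q a)))"
      using permutes_inverses(2)[OF q] by simp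
    finally show "of_int (sign (inv q)) * (\<Prod>a\<in>S. X (inv q a) (f a)) = of_int (sign q) * (\<Prod>a\<in>S. X a (f (q a)))"
      using pq by (simp add: sign_inverse)
  qed
  finally show ?thesis by simp
qed

lemma cauchy_binet_like:
  assumes S: "finite S" and C: "finite C"
  shows "of_nat (fact (card S)) * det_on S (\<lambda>a b. \<Sum>c\<in>C. X a c * Y b c)
       = (\<Sum>f\<in>PiE S (\<lambda>_. C). Delta X S f * Delta Y S f)"
proof -
  let ?P = "PiE S (\<lambda>_. C)"
  let ?T = "\<lambda>f. (\<Prod>a\<in>S. X a (f a)) * Delta Y S f"
  have re: "(\<Sum>f\<in>?P. ?T f) = (\<Sum>f\<in>?P. ?T (f \<circ> q))" if q: "q permutes S" for q
  proof (rule sum.reindex_bij_witness[where j = "\<lambda>f. f \<circ> inv q" and i = "\<lambda>f. f \<circ> q"])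
    have e1: "q \<circ> inv q = id" and e2: "inv q \<circ> q = id" using permutes_inv_o[OF q] by auto
    fix f assume f: "f \<in> ?P"
    show "f \<circ> inv q \<circ> q = f" by (simp only: comp_assoc e2 comp_id)
    show "f \<circ> inv q \<in> ?P" using f permutes_inv[OF q]
      by (auto simp: PiE_iff extensional_def permutes_in_image permutes_not_in)
    show "?T (f \<circ> inv q \<circ> q) = ?T f" by (simp only: comp_assoc e2 comp_id)
  next
    have e1: "q \<circ> inv q = id" and e2: "inv q \<circ> q = id" using permutes_inv_o[OF q] by auto
    fix f assume f: "f \<in> ?P"
    show "f \<circ> q \<circ> inv q = f" by (simp only: comp_assoc e1 comp_id)
    show "f \<circ> q \<in> ?P" using f q
      by (auto simp: PiE_iff extensional_def permutes_in_image permutes_not_in)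
  qed
  have "of_nat (fact (card S)) * det_on S (\<lambda>a b. \<Sum>c\<in>C. X a c * Y b c)
      = of_nat (card {q. q permutes S}) * (\<Sum>f\<in>?P. ?T f)"
    using card_permutations[OF refl S] det_expand[OF S C] by simp
  also have "\<dots> = (\<Sum>q | q permutes S. \<Sum>f\<in>?P. ?T f)" by simp
  also have "\<dots> = (\<Sum>q | q permutes S. \<Sum>f\<in>?P. ?T (f \<circ> q))"
    by (rule sum.cong[OF refl], rule re) simp
  also have "\<dots> = (\<Sum>f\<in>?P. \<Sum>q | q permutes S. ?T (f \<circ> q))"
    by (rule sum.swap)
  also have "\<dots> = (\<Sum>f\<in>?P. (\<Sum>q | q permutes S. of_int (sign q) * (\<Prod>a\<in>S. X a (f (q a)))) * Delta Y S f)"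
    by (intro sum.cong refl) (simp add: Delta_comp[OF S] sum_distrib_left sum_distrib_right mult_ac)
  also have "\<dots> = (\<Sum>f\<in>?P. Delta X S f * Delta Y S f)"
    by (simp add: Delta_avg[OF S])
  finally show ?thesis .
qed

lemma Delta_scale:
  assumes "finite S"
  shows "Delta (\<lambda>a c. \<alpha> a * g a c) S f = (\<Prod>a\<in>S. \<alpha> a) * Delta g S f"
proof -
  have "(\<Prod>a\<in>S. \<alpha> (p a)) = (\<Prod>a\<in>S. \<alpha> a)" if "p permutes S" for p
    using prod.permute[OF that, of \<alpha>] by (simp add: o_def)
  then show ?thesis unfolding Delta_def
    by (simp add: sum_distrib_left prod.distrib mult_ac)
qed

lemma gram_scaled_nonneg:
  assumes S: "finite S" and C: "finite C" and pos: "(\<Prod>a\<in>S. \<alpha> a) * (\<Prod>a\<in>S. \<gamma> a) \<ge> 0"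
  shows "det_on S (\<lambda>a b. \<Sum>c\<in>C. (\<alpha> a * g a c) * (\<gamma> b * g b c)) \<ge> 0"
proof -
  have "of_nat (fact (card S)) * det_on S (\<lambda>a b. \<Sum>c\<in>C. (\<alpha> a * g a c) * (\<gamma> b * g b c))
     = (\<Sum>f\<in>PiE S (\<lambda>_. C). ((\<Prod>a\<in>S. \<alpha> a) * (\<Prod>a\<in>S. \<gamma> a)) * (Delta g S f)\<^sup>2)"
    using cauchy_binet_like[OF S C, of "\<lambda>a c. \<alpha> a * g a c" "\<lambda>a c. \<gamma> a * g a c"]
    by (simp add: Delta_scale[OF S] power2_eq_square mult_ac)
  also have "\<dots> \<ge> 0" by (intro sum_nonneg mult_nonneg_nonneg[OF pos]) auto
  finally have "0 \<le> of_nat (fact (card S)) * det_on S (\<lambda>a b. \<Sum>c\<in>C. (\<alpha> a * g a c) * (\<gamma> b * g b c))" .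
  moreover have "(0::real) < of_nat (fact (card S))" by simp
  ultimately show ?thesis by (smt (verit) mult_pos_neg)
qed


definition Ecomp :: "('n \<Rightarrow> real) \<Rightarrow> ('n \<Rightarrow> real) \<Rightarrow> 'n \<times> 'n \<Rightarrow> 'n \<times> 'n \<Rightarrow> real" where
  "Ecomp s v p q = of_bool (snd q = snd p) * s (fst p) * v (fst q) - of_bool (snd q = fst p) * s (snd p) * v (fst q)
     + of_bool (fst q = fst p) * s (snd p) * v (snd q) - of_bool (fst q = snd p) * s (fst p) * v (snd q)"

lemma entry_formula:
  fixes s v :: "'n::finite \<Rightarrow> real"
  shows "add_compound2 (\<chi> i j. s i * v j) p q = Ecomp s v p q"
  unfolding add_compound2_def wedge2_def Ecomp_def
  by (simp add: matrix_vector_mult_def axis_def if_distrib[of "\<lambda>x. _ * x"] cong: if_cong)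

lemma aux: "(r::real) * r = w \<Longrightarrow> (A * (r * B)) * (C * (r * D)) = A * C * (B * (w * D))"
proof -
  assume h: "r * r = w"
  have "(A * (r * B)) * (C * (r * D)) = A * C * (B * ((r * r) * D))" by (simp add: ac_simps)
  then show ?thesis using h by simp
qed

lemma gram_rep:
  fixes s v :: "'n::finite \<Rightarrow> real"
  assumes pos: "\<And>k. s k * v k > 0"
  shows "Ecomp s v p q = (\<Sum>c\<in>UNIV. (s (fst p) * s (snd p) * (sqrt (1 / (s c * v c)) * (of_bool (c = snd p) - of_bool (c = fst p))))
            * (v (fst q) * v (snd q) * (sqrt (1 / (s c * v c)) * (of_bool (c = snd q) - of_bool (c = fst q)))))"
proof -
  obtain i j k l where p: "p = (i,j)" and q: "q = (k,l)" by (cases p, cases q) auto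
  let ?w = "\<lambda>c. 1 / (s c * v c)"
  have sq: "sqrt (?w c) * sqrt (?w c) = ?w c" for c using pos[of c] by simp
  have d: "(\<Sum>c\<in>UNIV. of_bool (c = a) * h c) = h a" for a and h :: "'n \<Rightarrow> real"
  proof -
    have "(\<Sum>c\<in>UNIV. of_bool (c = a) * h c) = (\<Sum>c\<in>UNIV. if c = a then h a else 0)"
      by (rule sum.cong) auto
    then show ?thesis by simp
  qed
  have "(\<Sum>c\<in>UNIV. (s i * s j * (sqrt (?w c) * (of_bool (c = j) - of_bool (c = i))))
            * (v k * v l * (sqrt (?w c) * (of_bool (c = l) - of_bool (c = k)))))
       = (\<Sum>c\<in>UNIV. s i * s j * (v k * v l) * ((of_bool (c = j) - of_bool (c = i)) * (?w c * (of_bool (c = l) - of_bool (c = k)))))"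
    by (rule sum.cong[OF refl]) (rule aux[OF sq])
  also have "\<dots> = s i * s j * (v k * v l) * (\<Sum>c\<in>UNIV. (of_bool (c = j) * (?w c * (of_bool (c = l) - of_bool (c = k))))
            - (of_bool (c = i) * (?w c * (of_bool (c = l) - of_bool (c = k)))))"
    by (simp only: sum_distrib_left[symmetric] left_diff_distrib)
  also have "\<dots> = s i * s j * (v k * v l) * (?w j * (of_bool (j = l) - of_bool (j = k)) - ?w i * (of_bool (i = l) - of_bool (i = k)))"
    by (simp only: sum_subtractf d)
  also have "\<dots> = Ecomp s v p q"
    unfolding p q Ecomp_def using pos[of i] pos[of j]
    using abs_of_pos[OF pos[of i]] abs_of_pos[OF pos[of j]]
    by (auto simp: of_bool_def field_simps)
  finally show ?thesis unfolding p q by simp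
qed

lemma pos_case:
  fixes s v :: "'n::finite \<Rightarrow> real"
  assumes pos: "\<And>k. s k * v k > 0" and S: "finite S"
  shows "det_on S (add_compound2 (\<chi> i j. s i * v j)) \<ge> 0"
proof -
  have eq: "add_compound2 (\<chi> i j. s i * v j) = (\<lambda>p q. \<Sum>c\<in>UNIV. (s (fst p) * s (snd p) * (sqrt (1 / (s c * v c)) * (of_bool (c = snd p) - of_bool (c = fst p))))
            * (v (fst q) * v (snd q) * (sqrt (1 / (s c * v c)) * (of_bool (c = snd q) - of_bool (c = fst q)))))"
    by (intro ext) (simp add: entry_formula gram_rep[OF pos])
  have "(\<Prod>a\<in>S. s (fst a) * s (snd a)) * (\<Prod>a\<in>S. v (fst a) * v (snd a))
      = (\<Prod>a\<in>S. (s (fst a) * v (fst a)) * (s (snd a) * v (snd a)))"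
    by (simp add: prod.distrib[symmetric] mult_ac)
  also have "\<dots> \<ge> 0" using pos by (intro prod_nonneg) (simp add: less_imp_le)
  finally have "(\<Prod>a\<in>S. s (fst a) * s (snd a)) * (\<Prod>a\<in>S. v (fst a) * v (snd a)) \<ge> 0" .
  then show ?thesis unfolding eq
    by (rule gram_scaled_nonneg[OF S finite_class.finite_UNIV])
qed


lemma Q0_sign:
  fixes u x :: "real^'n"
  assumes "x \<in> Q0set u"
  shows "0 \<le> x$i * u$i \<and> x$i * of_bool (u$i = 0) = 0"
proof -
  let ?K = "{x::real^'n. \<forall>i. 0 \<le> x$i * u$i \<and> x$i * of_bool (u$i = 0) = 0}"
  have cl: "closed ?K"
    by (intro closed_Collect_all closed_Collect_conj closed_Collect_le closed_Collect_eq continuous_intros)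
  have "Qset u \<subseteq> ?K"
  proof
    fix y assume "y \<in> Qset u"
    hence h: "sgn (y$i) = sgn (u$i)" for i by (simp add: Qset_def)
    show "y \<in> ?K"
    proof (intro CollectI allI conjI)
      fix i
      show "0 \<le> y$i * u$i" using h[of i] by (auto simp: sgn_real_def zero_le_mult_iff split: if_splits)
      show "y$i * of_bool (u$i = 0) = 0" using h[of i] by (auto simp: sgn_real_def split: if_splits)
    qed
  qed
  hence "Q0set u \<subseteq> ?K" unfolding Q0set_def using cl by (rule closure_minimal)
  thus ?thesis using assms by blast
qed

lemma prod_sign:
  fixes u s v :: "real^'n"
  assumes "s \<in> Q0set u" "v \<in> Q0set u"
  shows "0 \<le> s$k * v$k"
proof -
  have a: "0 \<le> s$k * u$k" "s$k * of_bool (u$k = 0) = 0" using Q0_sign[OF assms(1)] by auto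
  have b: "0 \<le> v$k * u$k" "v$k * of_bool (u$k = 0) = 0" using Q0_sign[OF assms(2)] by auto
  consider "u$k > 0" | "u$k < 0" | "u$k = 0" by linarith
  then show ?thesis
  proof cases
    case 1 then show ?thesis using a b by (simp add: zero_le_mult_iff)
  next
    case 2 then have "s$k \<le> 0" "v$k \<le> 0" using a b by (auto simp: zero_le_mult_iff)
    then show ?thesis by (simp add: zero_le_mult_iff)
  next
    case 3 then show ?thesis using a b by simp
  qed
qed

theorem lemma4p1:
  fixes u s v :: "real^'n::{finite,linorder}"
  assumes "CARD('n) \<ge> 2"
    and "s \<in> Q0set u" and "v \<in> Q0set u"
  shows "P0_on pairs_idx (add_compound2 (\<chi> i j. s$i * v$j))"
  unfolding P0_on_def
proof (intro allI impI)
  fix S :: "('n \<times> 'n) set"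
  have S: "finite S" by simp
  define d where "d k = (if s$k + v$k \<ge> 0 then 1 else (-1::real))" for k
  define F where "F e = det_on S (Ecomp (\<lambda>k. s$k + e * d k) (\<lambda>k. v$k + e * d k))" for e
  have E0: "add_compound2 (\<chi> i j. s$i * v$j) = Ecomp (\<lambda>k. s$k) (\<lambda>k. v$k)"
    using entry_formula[of "\<lambda>k. s$k" "\<lambda>k. v$k"] by (intro ext) simp
  have F0: "F 0 = det_on S (add_compound2 (\<chi> i j. s$i * v$j))"
    unfolding F_def E0 by simp
  have Fpos: "F e \<ge> 0" if e: "e > 0" for e
  proof -
    have "(s$k + e * d k) * (v$k + e * d k) > 0" for k
    proof -
      have sv: "0 \<le> s$k * v$k" by (rule prod_sign[OF assms(2,3)])
      show ?thesis
      proof (cases "s$k + v$k \<ge> 0")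
        case True
        then have "s$k \<ge> 0" "v$k \<ge> 0" using sv by (auto simp: zero_le_mult_iff)
        then show ?thesis using True e by (simp add: d_def)
      next
        case False
        then have "s$k \<le> 0" "v$k \<le> 0" using sv by (auto simp: zero_le_mult_iff)
        then have "s$k - e < 0" "v$k - e < 0" using e by auto
        then show ?thesis using False by (simp add: d_def mult_neg_neg)
      qed
    qed
    then have "det_on S (add_compound2 (\<chi> i j. (s$i + e * d i) * (v$j + e * d j))) \<ge> 0"
      by (rule pos_case[OF _ S])
    then show ?thesis unfolding F_def entry_formula .
  qed
  have "isCont F 0"
    unfolding F_def det_on_def Ecomp_def by (intro continuous_intros)
  then have lim: "(F \<longlongrightarrow> F 0) (at_right 0)"
    by (simp add: isCont_def filterlim_at_split)
  have ev: "\<forall>\<^sub>F e in at_right (0::real). 0 \<le> F e"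
    using eventually_at_right_less[of 0] by (rule eventually_mono) (rule Fpos)
  have "0 \<le> F 0" by (rule tendsto_lowerbound[OF lim ev trivial_limit_at_right_real])
  then show "0 \<le> det_on S (add_compound2 (\<chi> i j. s$i * v$j))" using F0 by simp
qed

end
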